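(* Let $B$ and $T$ be disjoint finite sets with a bijection $b\mapsto \bar b$ from $B$ to $T$, let $A$ be a $B\times T$ matrix over $GF(2)$ with $A_{b,\bar b}=0$ for all $b\in B$, and let $E=(I\mid A)$ be the $B\times(B\cup T)$ matrix whose $B$-columns form the identity and whose $T$-columns form $A$. Let $M$ be the column matroid of $E$ and $\Omega=\{\{b,\bar b\}: b\in B\}$. Then $(M,\Omega)$ is a $2$-sheltering matroid if and only if $A$ is symmetric, i.e. $A_{b,\bar c}=A_{c,\bar b}$ for all $b,c\in B$.
   Context: A sheltering matroid is a pair $(M,\Omega)$ where $M$ is a matroid on a finite set $U$ and $\Omega$ a partition of $U$ such that for every independent set $I$ of $M$ meeting each class of $\Omega$ in at most one element, and every $2$-element subset $\{x,y\}$ of a class $\omega$ with $\omega\cap I=\emptyset$, $I\cup\{x\}$ or $I\cup\{y\}$ is independent in $M$. It is a $2$-sheltering matroid if all classes have size $2$. *)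

theory Defs
  imports Main "HOL-Library.Z2"
begin

definition matroid :: "'a set \<Rightarrow> ('a set \<Rightarrow> bool) \<Rightarrow> bool" where
  "matroid U indep \<longleftrightarrow>
     finite U \<and>
     (\<forall>I. indep I \<longrightarrow> I \<subseteq> U) \<and>
     indep {} \<and>
     (\<forall>I J. indep J \<and> I \<subseteq> J \<longrightarrow> indep I) \<and>
     (\<forall>I J. indep I \<and> indep J \<and> card I < card J \<longrightarrow> (\<exists>x \<in> J - I. indep (insert x I)))"

definition is_partition :: "'a set \<Rightarrow> 'a set set \<Rightarrow> bool" where
  "is_partition U \<Omega> \<longleftrightarrow>
     \<Union>\<Omega> = U \<and> {} \<notin> \<Omega> \<and>
     (\<forall>\<omega>1 \<in> \<Omega>. \<forall>\<omega>2 \<in> \<Omega>. \<omega>1 \<noteq> \<omega>2 \<longrightarrow> \<omega>1 \<inter> \<omega>2 = {})"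

definition sheltering_matroid :: "'a set \<Rightarrow> ('a set \<Rightarrow> bool) \<Rightarrow> 'a set set \<Rightarrow> bool" where
  "sheltering_matroid U indep \<Omega> \<longleftrightarrow>
     matroid U indep \<and> is_partition U \<Omega> \<and>
     (\<forall>I. indep I \<and> (\<forall>\<omega> \<in> \<Omega>. card (\<omega> \<inter> I) \<le> 1) \<longrightarrow>
        (\<forall>\<omega> \<in> \<Omega>. \<omega> \<inter> I = {} \<longrightarrow>
           (\<forall>x y. x \<in> \<omega> \<and> y \<in> \<omega> \<and> x \<noteq> y \<longrightarrow>
              indep (insert x I) \<or> indep (insert y I))))"

definition two_sheltering_matroid :: "'a set \<Rightarrow> ('a set \<Rightarrow> bool) \<Rightarrow> 'a set set \<Rightarrow> bool" where
  "two_sheltering_matroid U indep \<Omega> \<longleftrightarrow>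
     sheltering_matroid U indep \<Omega> \<and> (\<forall>\<omega> \<in> \<Omega>. card \<omega> = 2)"

definition column_indep :: "'r set \<Rightarrow> 'c set \<Rightarrow> ('r \<Rightarrow> 'c \<Rightarrow> 'k::field) \<Rightarrow> 'c set \<Rightarrow> bool" where
  "column_indep R U E S \<longleftrightarrow> S \<subseteq> U \<and>
     (\<forall>c :: 'c \<Rightarrow> 'k. (\<forall>r \<in> R. (\<Sum>x\<in>S. c x * E r x) = 0) \<longrightarrow> (\<forall>x \<in> S. c x = 0))"

definition id_A_matrix :: "'a set \<Rightarrow> ('a \<Rightarrow> 'a \<Rightarrow> bit) \<Rightarrow> 'a \<Rightarrow> 'a \<Rightarrow> bit" where
  "id_A_matrix B A b x = (if x \<in> B then (if x = b then 1 else 0) else A b x)"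

end

theory Submission
  imports Defs "HOL-Library.Function_Algebras" "HOL.Vector_Spaces"
begin


lemma sum_apply_fun: "finite S \<Longrightarrow> (\<Sum>x\<in>S. f x) r = (\<Sum>x\<in>S. f x r)"
  by (induction S rule: finite_induct) auto

lemma fun_vs: "vector_space (\<lambda>(a::'k::field) (f::'r \<Rightarrow> 'k). (\<lambda>r. a * f r))"
  unfolding vector_space_def by (auto simp: fun_eq_iff algebra_simps)

lemma col_matroid:
  fixes E :: "'r \<Rightarrow> 'c \<Rightarrow> 'k::field"
  assumes fin: "finite U"
  shows "matroid U (column_indep R U E)"
proof -
  interpret V: vector_space "\<lambda>(a::'k) (f::'r \<Rightarrow> 'k). (\<lambda>r. a * f r)" by (rule fun_vs)
  define col where "col x = (\<lambda>r. if r \<in> R then E r x else 0)" for x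
  have sumcol: "(\<Sum>x\<in>S. (\<lambda>r. c x * col x r)) = (\<lambda>r. if r \<in> R then (\<Sum>x\<in>S. c x * E r x) else 0)"
    if "finite S" for S c
    using that by (auto simp: fun_eq_iff sum_apply_fun col_def)
  have sub: "column_indep R U E I" if "column_indep R U E J" "I \<subseteq> J" for I J
  proof -
    have fJ: "finite J" using that fin unfolding column_indep_def by (meson finite_subset)
    show ?thesis unfolding column_indep_def
    proof (intro conjI allI impI)
      show "I \<subseteq> U" using that unfolding column_indep_def by auto
      fix c :: "'c \<Rightarrow> 'k" assume h: "\<forall>r\<in>R. (\<Sum>x\<in>I. c x * E r x) = 0"
      define c' where "c' x = (if x \<in> I then c x else 0)" for x
      have "\<forall>r\<in>R. (\<Sum>x\<in>J. c' x * E r x) = 0"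
      proof
        fix r assume r: "r \<in> R"
        have "(\<Sum>x\<in>J. c' x * E r x) = (\<Sum>x\<in>J. if x \<in> I then c x * E r x else 0)"
          by (auto simp: c'_def intro!: sum.cong)
        also have "\<dots> = (\<Sum>x\<in>J \<inter> I. c x * E r x)" using sum.inter_restrict[OF fJ] by metis
        also have "J \<inter> I = I" using that by auto
        finally show "(\<Sum>x\<in>J. c' x * E r x) = 0" using h r by simp
      qed
      then have "\<forall>x\<in>J. c' x = 0" using that(1) unfolding column_indep_def by blast
      then show "\<forall>x\<in>I. c x = 0" using that(2) by (force simp: c'_def)
    qed
  qed
  have inj: "inj_on col S" if "column_indep R U E S" for S
  proof (rule inj_onI, rule ccontr)
    fix x y assume xy: "x \<in> S" "y \<in> S" "col x = col y" "x \<noteq> y"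
    have ci: "column_indep R U E {x, y}" using sub[OF that] xy by auto
    define c where "c z = (if z = x then 1 else if z = y then -1 else (0::'k))" for z
    have "\<forall>r\<in>R. (\<Sum>z\<in>{x,y}. c z * E r z) = 0"
    proof
      fix r assume r: "r \<in> R"
      have "E r x = E r y" using fun_cong[OF xy(3), of r] r by (simp add: col_def)
      then show "(\<Sum>z\<in>{x,y}. c z * E r z) = 0" using xy(4) by (simp add: c_def)
    qed
    then have "c x = 0" using ci unfolding column_indep_def by blast
    then show False by (simp add: c_def)
  qed
  have ind: "V.independent (col ` S)" if "column_indep R U E S" for S
  proof
    assume d: "V.dependent (col ` S)"
    have fS: "finite S" using that fin unfolding column_indep_def by (meson finite_subset)
    then obtain u where u: "\<exists>v\<in>col ` S. u v \<noteq> 0" "(\<Sum>v\<in>col ` S. (\<lambda>r. u v * v r)) = 0"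
      using d V.dependent_finite[of "col ` S"] by auto
    have "(\<Sum>v\<in>col ` S. (\<lambda>r. u v * v r)) = (\<Sum>x\<in>S. (\<lambda>r. u (col x) * col x r))"
      using sum.reindex[OF inj[OF that]] by (simp add: comp_def)
    also have "\<dots> = (\<lambda>r. if r \<in> R then (\<Sum>x\<in>S. u (col x) * E r x) else 0)"
      by (rule sumcol[OF fS])
    finally have "\<forall>r\<in>R. (\<Sum>x\<in>S. u (col x) * E r x) = 0"
      using u(2) by (metis (mono_tags, lifting) zero_fun_def)
    moreover have ci: "\<forall>c. (\<forall>r\<in>R. (\<Sum>x\<in>S. c x * E r x) = 0) \<longrightarrow> (\<forall>x\<in>S. c x = 0)"
      using that by (simp add: column_indep_def)
    ultimately have "\<forall>x\<in>S. u (col x) = 0" using spec[OF ci, of "\<lambda>x. u (col x)"] by simp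
    then show False using u(1) by auto
  qed
  have spn: "col x \<in> V.span (col ` I)"
    if I: "column_indep R U E I" and x: "x \<in> U" "x \<notin> I" and n: "\<not> column_indep R U E (insert x I)" for I x
  proof -
    have fI: "finite I" using I fin unfolding column_indep_def by (meson finite_subset)
    have "insert x I \<subseteq> U" using I x unfolding column_indep_def by auto
    then obtain c where c: "\<forall>r\<in>R. (\<Sum>z\<in>insert x I. c z * E r z) = 0" "\<exists>z\<in>insert x I. c z \<noteq> 0"
      using n unfolding column_indep_def by blast
    have c2: "\<forall>r\<in>R. c x * E r x + (\<Sum>z\<in>I. c z * E r z) = 0"
      using c(1) fI x(2) by simp
    have cx: "c x \<noteq> 0"
    proof
      assume "c x = 0"
      then have "\<forall>z\<in>I. c z = 0" using c2 I unfolding column_indep_def by auto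
      then show False using c(2) \<open>c x = 0\<close> by auto
    qed
    have eq: "col x = (\<Sum>z\<in>I. (\<lambda>r. (- c z / c x) * col z r))"
    proof -
      have "(\<Sum>z\<in>I. (\<lambda>r. (- c z / c x) * col z r)) = (\<lambda>r. if r \<in> R then (\<Sum>z\<in>I. (- c z / c x) * E r z) else 0)"
        by (rule sumcol[OF fI])
      moreover have "(\<Sum>z\<in>I. (- c z / c x) * E r z) = E r x" if "r \<in> R" for r
      proof -
        have "(\<Sum>z\<in>I. (- c z / c x) * E r z) = - (\<Sum>z\<in>I. c z * E r z) / c x"
          by (simp add: sum_divide_distrib sum_negf)
        also have "\<dots> = (c x * E r x) / c x" using c2 that by (metis add_eq_0_iff minus_minus)
        also have "\<dots> = E r x" using cx by simp
        finally show ?thesis .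
      qed
      ultimately show ?thesis by (auto simp: fun_eq_iff col_def)
    qed
    show ?thesis unfolding eq
      by (intro V.span_sum V.span_scale V.span_base) auto
  qed
  show ?thesis unfolding matroid_def
  proof (intro conjI allI impI)
    show "finite U" by fact
    show "column_indep R U E I \<Longrightarrow> I \<subseteq> U" for I by (simp add: column_indep_def)
    show "column_indep R U E {}" by (simp add: column_indep_def)
    show "column_indep R U E I" if "column_indep R U E J \<and> I \<subseteq> J" for I J using sub that by blast
    fix I J assume h: "column_indep R U E I \<and> column_indep R U E J \<and> card I < card J"
    have hI: "column_indep R U E I" and hJ: "column_indep R U E J" and hc: "card I < card J"
      using h by auto
    have JU: "J \<subseteq> U" using hJ by (simp add: column_indep_def)
    show "\<exists>x\<in>J - I. column_indep R U E (insert x I)"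
    proof (rule ccontr)
      assume nn: "\<not> (\<exists>x\<in>J - I. column_indep R U E (insert x I))"
      have "col x \<in> V.span (col ` I)" if xJ: "x \<in> J" for x
      proof (cases "x \<in> I")
        case True then show ?thesis by (intro V.span_base imageI)
      next
        case False
        then have "\<not> column_indep R U E (insert x I)" using nn xJ by blast
        moreover have "x \<in> U" using JU xJ by blast
        ultimately show ?thesis using spn[OF hI _ False] by blast
      qed
      then have sp: "col ` J \<subseteq> V.span (col ` I)" by blast
      have fI: "finite I" using hI fin unfolding column_indep_def by (meson finite_subset)
      have "card (col ` J) \<le> card (col ` I)"
        using V.independent_span_bound[OF finite_imageI[OF fI] ind[OF hJ] sp] by blast
      also have "\<dots> \<le> card I" using card_image_le[OF fI] by blast
      finally show False using card_image[OF inj[OF hJ]] hc by linarith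
    qed
  qed
qed


lemma bit_cases2: "(x::bit) = 0 \<or> x = 1" by (cases x) auto
lemma bit_add_self [simp]: "(x::bit) + x = 0" by (cases x) auto
lemma bit_add_eq0: "(a::bit) + s = 0 \<longleftrightarrow> s = a" by (cases a; cases s) auto
lemma bit_ne0: "(x::bit) \<noteq> 0 \<longleftrightarrow> x = 1" by (cases x) auto

declare add_bit_eq_xor[simp del] mult_bit_eq_and[simp del]

context
  fixes B T :: "'a set" and bar :: "'a \<Rightarrow> 'a" and A :: "'a \<Rightarrow> 'a \<Rightarrow> bit"
  assumes fB: "finite B" and fT: "finite T" and dj: "B \<inter> T = {}"
    and injb: "inj_on bar B" and imb: "bar ` B = T"
    and diag: "\<forall>b \<in> B. A b (bar b) = 0"
begin

lemma barT: "b \<in> B \<Longrightarrow> bar b \<in> T" using imb by auto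
lemma barnB: "b \<in> B \<Longrightarrow> bar b \<notin> B" using barT dj by auto

lemma rowsum_split:
  assumes IU: "I \<subseteq> B \<union> T" and r: "r \<in> B"
  shows "(\<Sum>x\<in>I. f x * id_A_matrix B A r x) =
     (if r \<in> I then f r else 0) + (\<Sum>y\<in>{y\<in>B. bar y \<in> I}. f (bar y) * A r (bar y))"
proof -
  have fI: "finite I" using IU fB fT by (meson finite_UnI finite_subset)
  have split: "I = (I \<inter> B) \<union> (I \<inter> T)" using IU by auto
  have "(\<Sum>x\<in>I. f x * id_A_matrix B A r x) =
      (\<Sum>x\<in>I \<inter> B. f x * id_A_matrix B A r x) + (\<Sum>x\<in>I \<inter> T. f x * id_A_matrix B A r x)"
    using sum.union_disjoint[of "I \<inter> B" "I \<inter> T"] fI dj split by (metis finite_Int inf_assoc inf_bot_right inf_left_commute)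
  moreover have "(\<Sum>x\<in>I \<inter> B. f x * id_A_matrix B A r x) = (\<Sum>x\<in>I \<inter> B. if x = r then f x else 0)"
    by (rule sum.cong) (auto simp: id_A_matrix_def)
  moreover have "\<dots> = (if r \<in> I then f r else 0)"
    using sum.delta'[of "I \<inter> B" r f] fI r by auto
  moreover have "I \<inter> T = bar ` {y\<in>B. bar y \<in> I}" using imb by auto
  moreover have "inj_on bar {y\<in>B. bar y \<in> I}" using injb by (rule inj_on_subset) auto
  moreover have "(\<Sum>y\<in>{y\<in>B. bar y \<in> I}. f (bar y) * id_A_matrix B A r (bar y)) =
       (\<Sum>y\<in>{y\<in>B. bar y \<in> I}. f (bar y) * A r (bar y))"
    by (rule sum.cong) (auto simp: id_A_matrix_def barnB)
  ultimately show ?thesis by (simp add: sum.reindex)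
qed

abbreviation "EE \<equiv> id_A_matrix B A"
abbreviation "ind \<equiv> column_indep B (B \<union> T) (id_A_matrix B A)"

lemma finU: "finite (B \<union> T)" using fB fT by simp

lemma sym_ok:
  assumes sym: "\<forall>b \<in> B. \<forall>c \<in> B. A b (bar c) = A c (bar b)"
    and indI: "ind I" and cls: "\<forall>y\<in>B. \<not> (y \<in> I \<and> bar y \<in> I)"
    and b: "b \<in> B" "b \<notin> I" "bar b \<notin> I"
  shows "ind (insert b I) \<or> ind (insert (bar b) I)"
proof (rule ccontr)
  assume "\<not> ?thesis"
  then have n1: "\<not> ind (insert b I)" and n2: "\<not> ind (insert (bar b) I)" by auto
  have IU: "I \<subseteq> B \<union> T" using indI by (simp add: column_indep_def)
  have fI: "finite I" using IU finU by (meson finite_subset)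
  have indI': "\<forall>c. (\<forall>r\<in>B. (\<Sum>x\<in>I. c x * EE r x) = 0) \<longrightarrow> (\<forall>x\<in>I. c x = 0)"
    using indI by (simp add: column_indep_def)
  define Y where "Y = {y\<in>B. bar y \<in> I}"
  have YB: "Y \<subseteq> B" by (auto simp: Y_def)
  have YnI: "y \<notin> I" if "y \<in> Y" for y using cls that by (auto simp: Y_def)
  have Ynb: "y \<noteq> b" if "y \<in> Y" for y using b that by (auto simp: Y_def)
  have "insert b I \<subseteq> B \<union> T" using IU b by auto
  then obtain l where l: "\<forall>r\<in>B. (\<Sum>x\<in>insert b I. l x * EE r x) = 0" "\<exists>x\<in>insert b I. l x \<noteq> 0"
    using n1 unfolding column_indep_def by blast
  have l2: "\<forall>r\<in>B. l b * EE r b + (\<Sum>x\<in>I. l x * EE r x) = 0" using l(1) fI b by simp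
  have lb: "l b = 1"
  proof (rule ccontr)
    assume "l b \<noteq> 1"
    then have "l b = 0" using bit_ne0 by blast
    then have "\<forall>x\<in>I. l x = 0" using l2 indI' by simp
    then show False using l(2) \<open>l b = 0\<close> by auto
  qed
  have L: "(if r \<in> I then l r else 0) + (\<Sum>y\<in>Y. l (bar y) * A r (bar y)) = (if r = b then 1 else 0)"
    if r: "r \<in> B" for r
  proof -
    have "EE r b = (if r = b then 1 else 0)" using b by (auto simp: id_A_matrix_def)
    then have "(\<Sum>x\<in>I. l x * EE r x) = (if r = b then 1 else 0)"
      using l2 r lb bit_add_eq0 by auto
    then show ?thesis using rowsum_split[OF IU r, of l] by (simp add: Y_def)
  qed
  have "insert (bar b) I \<subseteq> B \<union> T" using IU b barT by auto
  then obtain m where m: "\<forall>r\<in>B. (\<Sum>x\<in>insert (bar b) I. m x * EE r x) = 0" "\<exists>x\<in>insert (bar b) I. m x \<noteq> 0"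
    using n2 unfolding column_indep_def by blast
  have m2: "\<forall>r\<in>B. m (bar b) * EE r (bar b) + (\<Sum>x\<in>I. m x * EE r x) = 0" using m(1) fI b by simp
  have mb: "m (bar b) = 1"
  proof (rule ccontr)
    assume "m (bar b) \<noteq> 1"
    then have "m (bar b) = 0" using bit_ne0 by blast
    then have "\<forall>x\<in>I. m x = 0" using m2 indI' by simp
    then show False using m(2) \<open>m (bar b) = 0\<close> by auto
  qed
  have M: "(if r \<in> I then m r else 0) + (\<Sum>y\<in>Y. m (bar y) * A r (bar y)) = A r (bar b)"
    if r: "r \<in> B" for r
  proof -
    have "EE r (bar b) = A r (bar b)" using b barnB by (auto simp: id_A_matrix_def)
    then have "(\<Sum>x\<in>I. m x * EE r x) = A r (bar b)"
      using m2 r mb bit_add_eq0 by auto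
    then show ?thesis using rowsum_split[OF IU r, of m] by (simp add: Y_def)
  qed
  have L1: "(\<Sum>y\<in>Y. l (bar y) * A b (bar y)) = 1" using L[OF b(1)] b by simp
  have L2: "(\<Sum>y\<in>Y. l (bar y) * A y' (bar y)) = 0" if "y' \<in> Y" for y'
    using L[of y'] that YB YnI Ynb by auto
  have M1: "(\<Sum>y'\<in>Y. m (bar y') * A y (bar y')) = A y (bar b)" if "y \<in> Y" for y
    using M[of y] that YB YnI by auto
  have "1 = (\<Sum>y\<in>Y. l (bar y) * A b (bar y))" using L1 by simp
  also have "\<dots> = (\<Sum>y\<in>Y. l (bar y) * A y (bar b))"
    using sym YB b by (intro sum.cong) auto
  also have "\<dots> = (\<Sum>y\<in>Y. l (bar y) * (\<Sum>y'\<in>Y. m (bar y') * A y (bar y')))"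
    using M1 by (intro sum.cong) auto
  also have "\<dots> = (\<Sum>y\<in>Y. \<Sum>y'\<in>Y. m (bar y') * (l (bar y) * A y (bar y')))"
    by (simp add: sum_distrib_left mult.left_commute)
  also have "\<dots> = (\<Sum>y'\<in>Y. \<Sum>y\<in>Y. m (bar y') * (l (bar y) * A y (bar y')))"
    by (rule sum.swap)
  also have "\<dots> = (\<Sum>y'\<in>Y. m (bar y') * (\<Sum>y\<in>Y. l (bar y) * A y' (bar y)))"
  proof (rule sum.cong[OF refl])
    fix y' assume y': "y' \<in> Y"
    have "A y (bar y') = A y' (bar y)" if "y \<in> Y" for y using sym YB y' that by blast
    then show "(\<Sum>y\<in>Y. m (bar y') * (l (bar y) * A y (bar y'))) = m (bar y') * (\<Sum>y\<in>Y. l (bar y) * A y' (bar y))"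
      unfolding sum_distrib_left by (intro sum.cong refl) auto
  qed
  also have "\<dots> = 0" using L2 by simp
  finally show False by simp
qed

lemma asym_fail:
  assumes bc: "b \<in> B" "c \<in> B" and a1: "A b (bar c) = 1" and a0: "A c (bar b) = 0"
  shows "\<exists>I. ind I \<and> (\<forall>\<omega> \<in> (\<lambda>b. {b, bar b}) ` B. card (\<omega> \<inter> I) \<le> 1) \<and> {b, bar b} \<inter> I = {}
          \<and> \<not> ind (insert b I) \<and> \<not> ind (insert (bar b) I)"
proof -
  have bnc: "b \<noteq> c" using a1 diag bc by auto
  have bcb: "bar b \<noteq> bar c" using injb bc bnc by (meson inj_on_contraD)
  have nbs: "b \<noteq> bar b" "c \<noteq> bar c" "b \<noteq> bar c" "c \<noteq> bar b" "bar b \<noteq> b" "bar c \<noteq> c" "bar c \<noteq> b" "bar b \<noteq> c"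
    using barnB bc by metis+
  define I where "I = (B - {b, c}) \<union> {bar c}"
  have IU: "I \<subseteq> B \<union> T" using barT bc by (auto simp: I_def)
  have fI: "finite I" using IU finU by (meson finite_subset)
  have barI: "y \<in> B \<Longrightarrow> bar y \<in> I \<longleftrightarrow> y = c" for y
    using barnB injb bc by (auto simp: I_def dest: inj_onD)
  have Y1: "{y\<in>B. bar y \<in> I} = {c}" using barI bc by auto
  have Y2: "{y\<in>B. bar y \<in> insert b I} = {c}" using barI bc barnB by auto
  have Y3: "{y\<in>B. bar y \<in> insert (bar b) I} = {b, c}" using barI bc injb by (auto dest: inj_onD)
  have IU2: "insert b I \<subseteq> B \<union> T" using IU bc by auto
  have IU3: "insert (bar b) I \<subseteq> B \<union> T" using IU bc barT by auto
  have indI: "ind I" unfolding column_indep_def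
  proof (intro conjI allI impI)
    show "I \<subseteq> B \<union> T" by fact
    fix f :: "'a \<Rightarrow> bit" assume h: "\<forall>r\<in>B. (\<Sum>x\<in>I. f x * EE r x) = 0"
    have R: "(if r \<in> I then f r else 0) + f (bar c) * A r (bar c) = 0" if "r \<in> B" for r
      using h that rowsum_split[OF IU that, of f] Y1 by simp
    have fc: "f (bar c) = 0" proof -
      have "b \<noteq> bar c" using barnB[OF bc(2)] bc(1) by auto
      then show ?thesis using R[OF bc(1)] a1 by (simp add: I_def bnc)
    qed
    show "\<forall>x\<in>I. f x = 0"
    proof
      fix x assume x: "x \<in> I"
      show "f x = 0"
      proof (cases "x = bar c")
        case True then show ?thesis using fc by simp
      next
        case False
        then have "x \<in> B" using x by (auto simp: I_def)
        then show ?thesis using R[of x] x fc by simp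
      qed
    qed
  qed
  have cls: "\<forall>\<omega> \<in> (\<lambda>b. {b, bar b}) ` B. card (\<omega> \<inter> I) \<le> 1"
  proof
    fix \<omega> assume "\<omega> \<in> (\<lambda>b. {b, bar b}) ` B"
    then obtain d where d: "d \<in> B" "\<omega> = {d, bar d}" by auto
    show "card (\<omega> \<inter> I) \<le> 1"
    proof (cases "d = c")
      case True
      then have "\<omega> \<inter> I = {bar c}" using d by (auto simp: I_def)
      then show ?thesis by simp
    next
      case False
      then have "\<omega> \<inter> I \<subseteq> {d}" using d barI by auto
      then show ?thesis using card_mono[of "{d}" "\<omega> \<inter> I"] by simp
    qed
  qed
  have dis: "{b, bar b} \<inter> I = {}" using barnB bc bnc bcb by (auto simp: I_def)
  have n1: "\<not> ind (insert b I)"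
  proof
    assume ci: "ind (insert b I)"
    define f where "f x = (if x = bar c then 1 else if x \<in> B then A x (bar c) else 0)" for x
    have "\<forall>r\<in>B. (\<Sum>x\<in>insert b I. f x * EE r x) = 0"
    proof
      fix r assume r: "r \<in> B"
      have fbc: "f (bar c) = 1" by (simp add: f_def)
      have "(\<Sum>x\<in>insert b I. f x * EE r x) = (if r \<in> insert b I then f r else 0) + A r (bar c)"
        using rowsum_split[OF IU2 r, of f] Y2 fbc by simp
      also have "\<dots> = 0"
      proof (cases "r = c")
        case True then show ?thesis using bnc diag bc barnB[OF bc(2)] by (auto simp: I_def)
      next
        case False
        then have "r \<in> insert b I" using r by (auto simp: I_def)
        moreover have "f r = A r (bar c)" using r barnB bc by (auto simp: f_def)
        ultimately show ?thesis by simp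
      qed
      finally show "(\<Sum>x\<in>insert b I. f x * EE r x) = 0" .
    qed
    then have "\<forall>x\<in>insert b I. f x = 0" using ci by (simp add: column_indep_def)
    moreover have "bar c \<in> insert b I" by (simp add: I_def)
    ultimately have "f (bar c) = 0" by blast
    then show False by (simp add: f_def)
  qed
  have n2: "\<not> ind (insert (bar b) I)"
  proof
    assume ci: "ind (insert (bar b) I)"
    define f where "f x = (if x = bar b then 1 else if x \<in> B then A x (bar b) else 0)" for x
    have fbb: "f (bar b) = 1" by (simp add: f_def)
    have fbc: "f (bar c) = 0" using bcb barnB bc by (simp add: f_def)
    have "\<forall>r\<in>B. (\<Sum>x\<in>insert (bar b) I. f x * EE r x) = 0"
    proof
      fix r assume r: "r \<in> B"
      have "(\<Sum>x\<in>insert (bar b) I. f x * EE r x) = (if r \<in> insert (bar b) I then f r else 0) + A r (bar b)"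
        using rowsum_split[OF IU3 r, of f] Y3 fbb fbc bnc by simp
      also have "\<dots> = 0"
      proof (cases "r = b \<or> r = c")
        case True then show ?thesis using bnc diag bc a0 r nbs by (auto simp: I_def)
      next
        case False
        then have "r \<in> insert (bar b) I" using r by (auto simp: I_def)
        moreover have "f r = A r (bar b)" using r barnB bc by (auto simp: f_def)
        ultimately show ?thesis by simp
      qed
      finally show "(\<Sum>x\<in>insert (bar b) I. f x * EE r x) = 0" .
    qed
    then have "\<forall>x\<in>insert (bar b) I. f x = 0" using ci by (simp add: column_indep_def)
    then show False using fbb by simp
  qed
  show ?thesis using indI cls dis n1 n2 by blast
qed

end

theorem lemma2p6:
  fixes B T :: "'a set" and bar :: "'a \<Rightarrow> 'a" and A :: "'a \<Rightarrow> 'a \<Rightarrow> bit"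
  assumes "finite B" and "finite T" and "B \<inter> T = {}"
    and "bij_betw bar B T"
    and "\<forall>b \<in> B. A b (bar b) = 0"
  shows "two_sheltering_matroid (B \<union> T) (column_indep B (B \<union> T) (id_A_matrix B A))
           ((\<lambda>b. {b, bar b}) ` B)
         \<longleftrightarrow> (\<forall>b \<in> B. \<forall>c \<in> B. A b (bar c) = A c (bar b))"
proof -
  have injb: "inj_on bar B" and imb: "bar ` B = T" using assms(4) by (auto simp: bij_betw_def)
  note ctx = assms(1,2,3) injb imb assms(5)
  have nB: "b \<in> B \<Longrightarrow> bar b \<notin> B" for b using imb assms(3) by auto
  have nb: "b \<in> B \<Longrightarrow> bar b \<noteq> b" for b using nB by metis
  define ind where "ind = column_indep B (B \<union> T) (id_A_matrix B A)"
  define \<Omega> where "\<Omega> = (\<lambda>b. {b, bar b}) ` B"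
  have mat: "matroid (B \<union> T) ind" unfolding ind_def
    by (rule col_matroid) (use assms in simp)
  have part: "is_partition (B \<union> T) \<Omega>" unfolding is_partition_def \<Omega>_def
  proof (intro conjI ballI impI)
    show "\<Union> ((\<lambda>b. {b, bar b}) ` B) = B \<union> T" using imb by auto
    show "{} \<notin> (\<lambda>b. {b, bar b}) ` B" by auto
    fix w1 w2 assume w: "w1 \<in> (\<lambda>b. {b, bar b}) ` B" "w2 \<in> (\<lambda>b. {b, bar b}) ` B" "w1 \<noteq> w2"
    then obtain b c where bc: "b \<in> B" "c \<in> B" "w1 = {b, bar b}" "w2 = {c, bar c}" by auto
    then have "b \<noteq> c" using w by auto
    then have "bar b \<noteq> bar c" using injb bc by (meson inj_on_contraD)
    then show "w1 \<inter> w2 = {}" using bc \<open>b \<noteq> c\<close> nB by auto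
  qed
  have c2: "\<forall>\<omega>\<in>\<Omega>. card \<omega> = 2" unfolding \<Omega>_def
  proof
    fix w assume "w \<in> (\<lambda>b. {b, bar b}) ` B"
    then obtain b where "b \<in> B" "w = {b, bar b}" by auto
    then show "card w = 2" using nb[of b] by (auto simp: card_insert_if)
  qed
  define SC where "SC = (\<forall>I. ind I \<and> (\<forall>\<omega> \<in> \<Omega>. card (\<omega> \<inter> I) \<le> 1) \<longrightarrow>
        (\<forall>\<omega> \<in> \<Omega>. \<omega> \<inter> I = {} \<longrightarrow>
           (\<forall>x y. x \<in> \<omega> \<and> y \<in> \<omega> \<and> x \<noteq> y \<longrightarrow>
              ind (insert x I) \<or> ind (insert y I))))"
  have eq1: "two_sheltering_matroid (B \<union> T) ind \<Omega> \<longleftrightarrow> SC"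
    unfolding two_sheltering_matroid_def sheltering_matroid_def SC_def using mat part c2 by blast
  have "SC \<longleftrightarrow> (\<forall>b \<in> B. \<forall>c \<in> B. A b (bar c) = A c (bar b))"
  proof
    assume sc: SC
    have bad: False if bc: "b \<in> B" "c \<in> B" "A b (bar c) = 1" "A c (bar b) = 0" for b c
    proof -
      obtain I where I: "ind I" "\<forall>\<omega> \<in> \<Omega>. card (\<omega> \<inter> I) \<le> 1" "{b, bar b} \<inter> I = {}"
          "\<not> ind (insert b I)" "\<not> ind (insert (bar b) I)"
        using asym_fail[OF ctx bc] unfolding ind_def \<Omega>_def by blast
      have "{b, bar b} \<in> \<Omega>" using bc by (auto simp: \<Omega>_def)
      then show False using sc I nb[OF bc(1)] unfolding SC_def by blast
    qed
    show "\<forall>b \<in> B. \<forall>c \<in> B. A b (bar c) = A c (bar b)"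
    proof (intro ballI)
      fix b c assume b: "b \<in> B" and c: "c \<in> B"
      show "A b (bar c) = A c (bar b)"
      proof (rule ccontr)
        assume ne: "A b (bar c) \<noteq> A c (bar b)"
        show False
        proof (cases "A b (bar c) = 1")
          case True
          then have "A c (bar b) = 0" using ne bit_ne0 by metis
          then show False using bad[OF b c True] by blast
        next
          case False
          then have "A b (bar c) = 0" using bit_ne0 by blast
          moreover then have "A c (bar b) = 1" using ne bit_ne0 by metis
          ultimately show False using bad[OF c b] by blast
        qed
      qed
    qed
  next
    assume sym: "\<forall>b \<in> B. \<forall>c \<in> B. A b (bar c) = A c (bar b)"
    show SC unfolding SC_def
    proof (intro allI impI ballI)
      fix I \<omega> x y
      assume h: "ind I \<and> (\<forall>\<omega>\<in>\<Omega>. card (\<omega> \<inter> I) \<le> 1)" and w: "\<omega> \<in> \<Omega>" and d: "\<omega> \<inter> I = {}"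
        and xy: "x \<in> \<omega> \<and> y \<in> \<omega> \<and> x \<noteq> y"
      obtain b where b: "b \<in> B" "\<omega> = {b, bar b}" using w by (auto simp: \<Omega>_def)
      have cls: "\<forall>z\<in>B. \<not> (z \<in> I \<and> bar z \<in> I)"
      proof (intro ballI notI)
        fix z assume z: "z \<in> B" "z \<in> I \<and> bar z \<in> I"
        then have "{z, bar z} \<inter> I = {z, bar z}" by auto
        moreover have "{z, bar z} \<in> \<Omega>" using z by (auto simp: \<Omega>_def)
        ultimately have "card {z, bar z} \<le> 1" using h by metis
        then show False using nb[OF z(1)] by simp
      qed
      have "ind (insert b I) \<or> ind (insert (bar b) I)"
        using sym_ok[OF ctx sym _ cls b(1)] h d b unfolding ind_def by blast
      moreover have "(x = b \<and> y = bar b) \<or> (x = bar b \<and> y = b)" using xy b by auto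
      ultimately show "ind (insert x I) \<or> ind (insert y I)" by blast
    qed
  qed
  then show ?thesis using eq1 unfolding ind_def \<Omega>_def by simp
qed

end
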